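(* Let $p_0,p_1,p_2$ be positive integers with $\gcd(p_0,p_1,p_2)=1$, and put $n=p_0+p_1+p_2$. Let $E=(\mathbb{Z}/n\mathbb{Z})\times\{0,1,2\}$ and define permutations $\sigma_0,\sigma_1$ of $E$ by $$\sigma_0(m,0)=(m,1),\quad \sigma_0(m,1)=(m,2),\quad \sigma_0(m,2)=(m,0),$$ $$\sigma_1(m,0)=(m-p_1,2),\quad \sigma_1(m,1)=(m-p_2,0),\quad \sigma_1(m,2)=(m-p_0,1),$$ with arithmetic in the first coordinate modulo $n$. Let $N=\langle\sigma_0\sigma_1,\sigma_1\sigma_0\rangle$ and $H=\langle\sigma_0\rangle$. Then $N\cap H=\{\mathrm{id}\}$.
   Context: These $\sigma_0,\sigma_1$ are the monodromy permutations of the dessin drawn on the rational billiards surface of the triangle with angles $(p_0\pi/n,p_1\pi/n,p_2\pi/n)$, acting on its $3n$ edges labeled $(m,i)$. Products are composition of functions. *)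

theory Defs
  imports "HOL-Algebra.Algebra"
begin

text \<open>Edges (m,i) with m in Z/nZ represented by {0..<n}, i in {0,1,2}.\<close>
definition edges :: "nat \<Rightarrow> (nat \<times> nat) set" where
  "edges n = {0..<n} \<times> {0..<3}"

definition sigma0 :: "nat \<Rightarrow> nat \<Rightarrow> nat \<Rightarrow> (nat \<times> nat) \<Rightarrow> (nat \<times> nat)" where
  "sigma0 p0 p1 p2 = (\<lambda>e \<in> edges (p0+p1+p2).
     (case e of (m, i) \<Rightarrow> (m, (i + 1) mod 3)))"

definition sigma1 :: "nat \<Rightarrow> nat \<Rightarrow> nat \<Rightarrow> (nat \<times> nat) \<Rightarrow> (nat \<times> nat)" where
  "sigma1 p0 p1 p2 = (let n = p0+p1+p2 in (\<lambda>e \<in> edges n.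
     (case e of (m, i) \<Rightarrow>
        if i = 0 then (nat ((int m - int p1) mod int n), 2)
        else if i = 1 then (nat ((int m - int p2) mod int n), 0)
        else (nat ((int m - int p0) mod int n), 1))))"

end

theory Submission
  imports Defs
begin

lemma edges_mem: "e \<in> edges n \<longleftrightarrow> fst e < n \<and> snd e < 3"
  by (cases e) (auto simp: edges_def)

lemma sigma0_Bij: "sigma0 p0 p1 p2 \<in> Bij (edges (p0+p1+p2))"
proof -
  let ?S = "edges (p0+p1+p2)"
  have ext: "sigma0 p0 p1 p2 \<in> extensional ?S" by (simp add: sigma0_def)
  have img: "sigma0 p0 p1 p2 ` ?S \<subseteq> ?S"
    by (auto simp: sigma0_def edges_mem)
  have inj: "inj_on (sigma0 p0 p1 p2) ?S"
    by (auto simp: inj_on_def sigma0_def edges_mem) presburger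
  have "finite ?S" by (simp add: edges_def)
  then have "sigma0 p0 p1 p2 ` ?S = ?S" using endo_inj_surj img inj by blast
  then show ?thesis using ext inj by (simp add: Bij_def bij_betw_def)
qed

lemma modeq: "(m::nat) < n \<Longrightarrow> m' < n \<Longrightarrow> nat ((int m - int p) mod int n) = nat ((int m' - int p) mod int n) \<Longrightarrow> m = m'"
proof -
  assume a: "m < n" "m' < n" "nat ((int m - int p) mod int n) = nat ((int m' - int p) mod int n)"
  have "(int m - int p) mod int n = (int m' - int p) mod int n"
    using a(3) a(1) by (simp add: nat_eq_iff2 eq_nat_nat_iff)
  then have "int m mod int n = int m' mod int n"
    by (metis diff_add_cancel mod_add_left_eq)
  then show "m = m'" using a by simp
qed

lemma sigma1_Bij: "sigma1 p0 p1 p2 \<in> Bij (edges (p0+p1+p2))"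
proof -
  let ?S = "edges (p0+p1+p2)"
  let ?n = "p0+p1+p2"
  have ext: "sigma1 p0 p1 p2 \<in> extensional ?S" by (simp add: sigma1_def Let_def)
  have img: "sigma1 p0 p1 p2 ` ?S \<subseteq> ?S"
  proof
    fix x assume "x \<in> sigma1 p0 p1 p2 ` ?S"
    then obtain m i where "(m,i) \<in> ?S" "x = sigma1 p0 p1 p2 (m,i)" by auto
    moreover then have "m < ?n" by (simp add: edges_def)
    moreover have "nat ((int m - int p) mod int ?n) < ?n" if "m < ?n" for p
      using that by (simp add: nat_less_iff)
    ultimately show "x \<in> ?S" by (auto simp: sigma1_def edges_def Let_def)
  qed
  have inj: "inj_on (sigma1 p0 p1 p2) ?S"
  proof (rule inj_onI)
    fix x y assume xy: "x \<in> ?S" "y \<in> ?S" "sigma1 p0 p1 p2 x = sigma1 p0 p1 p2 y"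
    obtain m i where x: "x = (m,i)" by (cases x)
    obtain m' i' where y: "y = (m',i')" by (cases y)
    have b: "m < ?n" "m' < ?n" "i < 3" "i' < 3" using xy x y by (auto simp: edges_def)
    have "i = i'"
      using xy(3) b unfolding x y using xy(1,2) x y
      by (auto simp: sigma1_def Let_def split: if_splits)
    moreover have "m = m'"
      using xy(3) b unfolding x y using xy(1,2) x y
      by (auto simp: sigma1_def Let_def split: if_splits dest: modeq)
    ultimately show "x = y" using x y by simp
  qed
  have "finite ?S" by (simp add: edges_def)
  then have "sigma1 p0 p1 p2 ` ?S = ?S" using endo_inj_surj img inj by blast
  then show ?thesis using ext inj by (simp add: Bij_def bij_betw_def)
qed


lemma mult_Bij: "a \<in> Bij S \<Longrightarrow> b \<in> Bij S \<Longrightarrow> a \<otimes>\<^bsub>BijGroup S\<^esub> b = compose S a b"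
  by (simp add: BijGroup_def)

lemma compose_Bij_app: "x \<in> S \<Longrightarrow> compose S a b x = a (b x)"
  by (simp add: compose_def)

lemma Bij_mem: "f \<in> Bij S \<Longrightarrow> x \<in> S \<Longrightarrow> f x \<in> S"
  using Bij_imp_funcset by blast

lemma inv_app: assumes "f \<in> Bij S" "x \<in> S"
  shows "(inv\<^bsub>BijGroup S\<^esub> f) x \<in> S \<and> f ((inv\<^bsub>BijGroup S\<^esub> f) x) = x"
proof -
  have b: "bij_betw f S S" using assms(1) by (simp add: Bij_def)
  have "(inv\<^bsub>BijGroup S\<^esub> f) x = inv_into S f x" unfolding inv_BijGroup[OF assms(1)] using assms(2) by simp
  moreover have "inv_into S f x \<in> S" by (rule Bij_inv_into_mem[OF assms])
  moreover have "f (inv_into S f x) = x"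
  proof -
    have "f ` S = S" using b by (simp add: bij_betw_def)
    then have "x \<in> f ` S" using assms(2) by simp
    then show ?thesis by (rule f_inv_into_f)
  qed
  ultimately show ?thesis by simp
qed

theorem lemma5:
  fixes p0 p1 p2 :: nat
  assumes "0 < p0" and "0 < p1" and "0 < p2"
    and "gcd p0 (gcd p1 p2) = 1"
  shows "generate (BijGroup (edges (p0+p1+p2)))
            {sigma0 p0 p1 p2 \<otimes>\<^bsub>BijGroup (edges (p0+p1+p2))\<^esub> sigma1 p0 p1 p2,
             sigma1 p0 p1 p2 \<otimes>\<^bsub>BijGroup (edges (p0+p1+p2))\<^esub> sigma0 p0 p1 p2}
         \<inter> generate (BijGroup (edges (p0+p1+p2))) {sigma0 p0 p1 p2}
         = {\<one>\<^bsub>BijGroup (edges (p0+p1+p2))\<^esub>}"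
proof -
  define S where "S = edges (p0+p1+p2)"
  define G where "G = BijGroup S"
  define s0 where "s0 = sigma0 p0 p1 p2"
  define s1 where "s1 = sigma1 p0 p1 p2"
  have b0: "s0 \<in> Bij S" using sigma0_Bij s0_def S_def by simp
  have b1: "s1 \<in> Bij S" using sigma1_Bij s1_def S_def by simp
  have s0app: "s0 e = (fst e, (snd e + 1) mod 3)" if "e \<in> S" for e
    using that by (cases e) (simp add: s0_def sigma0_def S_def)
  have s1lev: "snd (s1 e) = (if snd e = 0 then 2 else if snd e = 1 then 0 else 1)" if "e \<in> S" for e
    using that by (cases e) (simp add: s1_def sigma1_def S_def Let_def)
  have S3: "e \<in> S \<Longrightarrow> snd e < 3" for e by (simp add: S_def edges_mem)
  define P where "P = {f \<in> Bij S. \<forall>e\<in>S. snd (f e) = snd e}"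
  define Q where "Q = {f \<in> Bij S. \<exists>k. \<forall>e\<in>S. f e = (fst e, (snd e + k) mod 3)}"
  have oneG: "\<one>\<^bsub>G\<^esub> = (\<lambda>x\<in>S. x)" by (simp add: G_def BijGroup_def)
  have Pmult: "a \<in> P \<Longrightarrow> b \<in> P \<Longrightarrow> a \<otimes>\<^bsub>G\<^esub> b \<in> P" for a b
    unfolding P_def G_def
    by (auto simp: mult_Bij compose_Bij_app compose_Bij Bij_mem)
  have Pgen: "{s0 \<otimes>\<^bsub>G\<^esub> s1, s1 \<otimes>\<^bsub>G\<^esub> s0} \<subseteq> P"
  proof -
    have lv: "snd (s0 (s1 e)) = snd e" "snd (s1 (s0 e)) = snd e" if e: "e \<in> S" for e
    proof -
      have e1: "s1 e \<in> S" "s0 e \<in> S" using Bij_mem[OF b1 e] Bij_mem[OF b0 e] by auto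
      have "snd e < 3" using S3 e by simp
      then have c: "snd e = 0 \<or> snd e = 1 \<or> snd e = 2" by linarith
      show "snd (s0 (s1 e)) = snd e"
        using c s0app[OF e1(1)] s1lev[OF e] by auto
      have h0: "snd (s0 e) = (snd e + 1) mod 3" using s0app[OF e] by simp
      show "snd (s1 (s0 e)) = snd e"
        using c h0 s1lev[OF e1(2)] by (elim disjE) simp_all
    qed
    have "s0 \<otimes>\<^bsub>G\<^esub> s1 \<in> P" "s1 \<otimes>\<^bsub>G\<^esub> s0 \<in> P"
      unfolding P_def G_def using b0 b1 lv
      by (simp_all add: mult_Bij compose_Bij_app compose_Bij)
    then show ?thesis by simp
  qed
  have Pinv: "h \<in> P \<Longrightarrow> inv\<^bsub>G\<^esub> h \<in> P" for h
  proof -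
    assume h: "h \<in> P"
    then have hb: "h \<in> Bij S" by (simp add: P_def)
    have "inv\<^bsub>G\<^esub> h \<in> Bij S"
      unfolding G_def inv_BijGroup[OF hb] by (rule restrict_inv_into_Bij[OF hb])
    moreover have "snd ((inv\<^bsub>G\<^esub> h) e) = snd e" if "e \<in> S" for e
    proof -
      have i: "(inv\<^bsub>G\<^esub> h) e \<in> S" "h ((inv\<^bsub>G\<^esub> h) e) = e"
        using inv_app[OF hb that] unfolding G_def by auto
      have "\<forall>e\<in>S. snd (h e) = snd e" using h by (simp add: P_def)
      then have "snd (h ((inv\<^bsub>G\<^esub> h) e)) = snd ((inv\<^bsub>G\<^esub> h) e)" using i(1) by blast
      then show ?thesis using i(2) by simp
    qed
    ultimately show ?thesis by (simp add: P_def)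
  qed
  have NP: "f \<in> P" if "f \<in> generate G {s0 \<otimes>\<^bsub>G\<^esub> s1, s1 \<otimes>\<^bsub>G\<^esub> s0}" for f
    using that
  proof (induction rule: generate.induct)
    case one
    show ?case unfolding oneG P_def
    proof (intro CollectI conjI ballI)
      show "(\<lambda>x\<in>S. x) \<in> Bij S" by (rule id_Bij)
    next
      fix e assume "e \<in> S" then show "snd ((\<lambda>x\<in>S. x) e) = snd e" by simp
    qed
  next
    case (incl h)
    then show ?case using Pgen by blast
  next
    case (inv h)
    then show ?case using Pgen Pinv by blast
  next
    case (eng h1 h2)
    then show ?case using Pmult by blast
  qed
  have Qmult: "a \<in> Q \<Longrightarrow> b \<in> Q \<Longrightarrow> a \<otimes>\<^bsub>G\<^esub> b \<in> Q" for a b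
  proof -
    assume a: "a \<in> Q" and b: "b \<in> Q"
    then obtain k1 k2 where k1: "\<forall>e\<in>S. a e = (fst e, (snd e + k1) mod 3)"
      and k2: "\<forall>e\<in>S. b e = (fst e, (snd e + k2) mod 3)" by (auto simp: Q_def)
    have ab: "a \<in> Bij S" "b \<in> Bij S" using a b by (auto simp: Q_def)
    have "\<forall>e\<in>S. (a \<otimes>\<^bsub>G\<^esub> b) e = (fst e, (snd e + (k1 + k2)) mod 3)"
    proof
      fix e assume e: "e \<in> S"
      have "(a \<otimes>\<^bsub>G\<^esub> b) e = a (b e)" using ab e by (simp add: G_def mult_Bij compose_Bij_app)
      also have "\<dots> = (fst e, ((snd e + k2) mod 3 + k1) mod 3)"
        using k1 k2 e Bij_mem[OF ab(2) e] by simp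
      also have "\<dots> = (fst e, (snd e + (k1 + k2)) mod 3)" by (metis mod_add_left_eq add.commute add.left_commute)
      finally show "(a \<otimes>\<^bsub>G\<^esub> b) e = (fst e, (snd e + (k1 + k2)) mod 3)" .
    qed
    moreover have "a \<otimes>\<^bsub>G\<^esub> b \<in> Bij S" using ab by (simp add: G_def mult_Bij compose_Bij)
    ultimately show ?thesis unfolding Q_def by blast
  qed
  have Qs0: "s0 \<in> Q"
  proof -
    have "\<forall>e\<in>S. s0 e = (fst e, (snd e + 1) mod 3)" using s0app by blast
    then show ?thesis using b0 unfolding Q_def by blast
  qed
  have Qinv: "inv\<^bsub>G\<^esub> s0 \<in> Q"
  proof -
    have "inv\<^bsub>G\<^esub> s0 \<in> Bij S"
      unfolding G_def inv_BijGroup[OF b0] by (rule restrict_inv_into_Bij[OF b0])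
    moreover have "\<forall>e\<in>S. (inv\<^bsub>G\<^esub> s0) e = (fst e, (snd e + 2) mod 3)"
    proof
      fix e assume e: "e \<in> S"
      obtain x where x: "x = (inv\<^bsub>G\<^esub> s0) e" by simp
      have "x \<in> S" "s0 x = e" using inv_app[OF b0 e] x by (auto simp: G_def)
      then have "e = (fst x, (snd x + 1) mod 3)" "snd x < 3" using s0app S3 by auto
      then have "x = (fst e, (snd e + 2) mod 3)"
      proof (cases x)
        case (Pair a b)
        assume "e = (fst x, (snd x + 1) mod 3)" "snd x < 3"
        then have "b < 3" "e = (a, (b + 1) mod 3)" using Pair by auto
        moreover have "b = ((b + 1) mod 3 + 2) mod 3" using \<open>b < 3\<close> by presburger
        ultimately show ?thesis using Pair by simp
      qed
      then show "(inv\<^bsub>G\<^esub> s0) e = (fst e, (snd e + 2) mod 3)" using x by simp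
    qed
    ultimately show ?thesis unfolding Q_def by blast
  qed
  have HQ: "f \<in> Q" if "f \<in> generate G {s0}" for f
    using that
  proof (induction rule: generate.induct)
    case one
    have "\<forall>e\<in>S. (\<lambda>x\<in>S. x) e = (fst e, (snd e + 0) mod 3)" using S3 by auto
    moreover have "(\<lambda>x\<in>S. x) \<in> Bij S" by (rule id_Bij)
    ultimately show ?case unfolding Q_def oneG by blast
  next
    case (incl h)
    then show ?case using Qs0 by blast
  next
    case (inv h)
    then show ?case using Qinv by blast
  next
    case (eng h1 h2)
    then show ?case using Qmult by blast
  qed
  have z: "(0, 0) \<in> S" using assms(1) by (simp add: S_def edges_def)
  have "generate G {s0 \<otimes>\<^bsub>G\<^esub> s1, s1 \<otimes>\<^bsub>G\<^esub> s0} \<inter> generate G {s0} = {\<one>\<^bsub>G\<^esub>}"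
  proof
    show "{\<one>\<^bsub>G\<^esub>} \<subseteq> generate G {s0 \<otimes>\<^bsub>G\<^esub> s1, s1 \<otimes>\<^bsub>G\<^esub> s0} \<inter> generate G {s0}"
      by (auto intro: generate.one)
    show "generate G {s0 \<otimes>\<^bsub>G\<^esub> s1, s1 \<otimes>\<^bsub>G\<^esub> s0} \<inter> generate G {s0} \<subseteq> {\<one>\<^bsub>G\<^esub>}"
    proof
      fix f assume f: "f \<in> generate G {s0 \<otimes>\<^bsub>G\<^esub> s1, s1 \<otimes>\<^bsub>G\<^esub> s0} \<inter> generate G {s0}"
      then have fP: "f \<in> P" and fQ: "f \<in> Q" using NP HQ by auto
      then obtain k where k: "\<forall>e\<in>S. f e = (fst e, (snd e + k) mod 3)" by (auto simp: Q_def)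
      have "snd (f (0,0)) = 0" using fP z by (auto simp: P_def)
      then have k0: "k mod 3 = 0" using k z by auto
      have "\<forall>e\<in>S. f e = e"
      proof
        fix e assume e: "e \<in> S"
        have "(snd e + k) mod 3 = snd e" using k0 S3[OF e] by presburger
        then show "f e = e" using k e by (cases e) auto
      qed
      moreover have "f \<in> extensional S" using fP by (simp add: P_def Bij_imp_extensional)
      ultimately have "f = (\<lambda>x\<in>S. x)" by (auto simp: extensional_def)
      then show "f \<in> {\<one>\<^bsub>G\<^esub>}" using oneG by simp
    qed
  qed
  then show ?thesis by (simp add: G_def S_def s0_def s1_def)
qed

end
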